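(* Let $G$ be a modular noetherian right $\ell$-group in which the meet $s^{-1} := \bigwedge X(G^-)$ exists. Then an element $g \in G^-$ is meet-irreducible in $G^-$ if and only if $g$ is a dual chain, i.e. the interval $[g,e]$ is a chain.
   Context: A right $\ell$-group is a group $G$ (identity $e$) with a right-invariant partial order making $G$ a lattice. It is modular if the lattice is modular. It is noetherian if for each $g$ the set $\{h \geq g\}$ satisfies the descending chain condition and the set $\{h \leq g\}$ satisfies the ascending chain condition. $G^- = \{g \leq e\}$, $X(G^-)$ is the set of elements covered by $e$, and $[a,b] = \{x : a \leq x \leq b\}$. An element $g$ is meet-irreducible in $G^-$ if there are no $a,b \in G^-$, both different from $g$, with $g = a\wedge b$. *)

theory Defs
  imports Main
begin

definition right_l_group :: "('a::lattice \<Rightarrow> 'a \<Rightarrow> 'a) \<Rightarrow> 'a \<Rightarrow> ('a \<Rightarrow> 'a) \<Rightarrow> bool" where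
  "right_l_group m e i \<longleftrightarrow>
     (\<forall>x y z. m (m x y) z = m x (m y z)) \<and>
     (\<forall>x. m e x = x \<and> m x e = x) \<and>
     (\<forall>x. m (i x) x = e \<and> m x (i x) = e) \<and>
     (\<forall>x y z. x \<le> y \<longrightarrow> m x z \<le> m y z)"

definition modular_lattice :: "'a::lattice itself \<Rightarrow> bool" where
  "modular_lattice _ \<longleftrightarrow> (\<forall>x y z::'a. x \<le> z \<longrightarrow> sup x (inf y z) = inf (sup x y) z)"

definition noetherian_order :: "'a::order itself \<Rightarrow> bool" where
  "noetherian_order _ \<longleftrightarrow> (\<forall>g::'a.
     (\<nexists>f::nat \<Rightarrow> 'a. (\<forall>n. g \<le> f n) \<and> (\<forall>n. f (Suc n) < f n)) \<and>
     (\<nexists>f::nat \<Rightarrow> 'a. (\<forall>n. f n \<le> g) \<and> (\<forall>n. f n < f (Suc n))))"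

definition covered_by :: "'a::order \<Rightarrow> 'a \<Rightarrow> bool" where
  "covered_by x y \<longleftrightarrow> x < y \<and> \<not> (\<exists>z. x < z \<and> z < y)"

definition coatoms_below :: "'a::order \<Rightarrow> 'a set" where
  "coatoms_below e = {x. covered_by x e}"

definition is_meet_of :: "'a::order set \<Rightarrow> 'a \<Rightarrow> bool" where
  "is_meet_of A s \<longleftrightarrow> (\<forall>x\<in>A. s \<le> x) \<and> (\<forall>t. (\<forall>x\<in>A. t \<le> x) \<longrightarrow> t \<le> s)"

definition meet_irreducible_neg :: "'a::lattice \<Rightarrow> 'a \<Rightarrow> bool" where
  "meet_irreducible_neg e g \<longleftrightarrow> g \<le> e \<and>
     \<not> (\<exists>a b. a \<le> e \<and> b \<le> e \<and> a \<noteq> g \<and> b \<noteq> g \<and> g = inf a b)"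

definition dual_chain :: "'a::order \<Rightarrow> 'a \<Rightarrow> bool" where
  "dual_chain e g \<longleftrightarrow> (\<forall>x y. g \<le> x \<and> x \<le> e \<and> g \<le> y \<and> y \<le> e \<longrightarrow> x \<le> y \<or> y \<le> x)"

end

theory Submission
  imports Defs
begin

definition cc :: "'a::order \<Rightarrow> 'a \<Rightarrow> nat \<Rightarrow> bool" where
  "cc a b k \<longleftrightarrow> (\<exists>f. f 0 = a \<and> f k = b \<and> (\<forall>j<k. covered_by (f j) (f (Suc j))))"

definition ch :: "'a::order \<Rightarrow> 'a \<Rightarrow> nat \<Rightarrow> bool" where
  "ch a b k \<longleftrightarrow> (\<exists>f. f 0 = a \<and> f k = b \<and> (\<forall>j<k. f j < f (Suc j)))"

lemma cov_less: "covered_by x y \<Longrightarrow> x < y"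
  by (simp add: covered_by_def)

lemma cov_between: "covered_by x y \<Longrightarrow> x < w \<Longrightarrow> w \<le> y \<Longrightarrow> w = y"
  unfolding covered_by_def by (auto simp: le_less)

lemma cov_between2: "covered_by x y \<Longrightarrow> x \<le> w \<Longrightarrow> w < y \<Longrightarrow> w = x"
  unfolding covered_by_def by (auto simp: le_less)

lemma cc_ch: "cc a b k \<Longrightarrow> ch a b k"
  unfolding cc_def ch_def using cov_less by blast

lemma ch_mono_aux: "\<forall>j<k. f j < f (Suc j) \<Longrightarrow> j \<le> k \<Longrightarrow> f 0 \<le> (f j :: 'a::order)"
proof (induction j)
  case 0 then show ?case by simp
next
  case (Suc j)
  then have "f 0 \<le> f j" by simp
  moreover have "f j < f (Suc j)" using Suc.prems by simp
  ultimately show ?case by simp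
qed

lemma ch_le: "ch a b k \<Longrightarrow> a \<le> b"
  unfolding ch_def using ch_mono_aux by blast

lemma cc_zero: "cc a b 0 \<Longrightarrow> a = b"
  unfolding cc_def by auto

lemma cc_refl: "cc a a 0"
  unfolding cc_def by auto

lemma cc_snoc: assumes "cc a b k" "covered_by b c" shows "cc a c (Suc k)"
proof -
  obtain f where f: "f 0 = a" "f k = b" "\<forall>j<k. covered_by (f j) (f (Suc j))"
    using assms(1) unfolding cc_def by blast
  let ?g = "f(Suc k := c)"
  have "?g 0 = a" "?g (Suc k) = c" using f by auto
  moreover have "\<forall>j<Suc k. covered_by (?g j) (?g (Suc j))"
  proof (intro allI impI)
    fix j assume "j < Suc k"
    then show "covered_by (?g j) (?g (Suc j))"
      using f assms(2) by (cases "j = k") auto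
  qed
  ultimately show ?thesis unfolding cc_def by blast
qed

lemma ch_snoc: assumes "ch a b k" "b < c" shows "ch a c (Suc k)"
proof -
  obtain f where f: "f 0 = a" "f k = b" "\<forall>j<k. f j < f (Suc j)"
    using assms(1) unfolding ch_def by blast
  let ?g = "f(Suc k := c)"
  have "?g 0 = a" "?g (Suc k) = c" using f by auto
  moreover have "\<forall>j<Suc k. ?g j < ?g (Suc j)"
  proof (intro allI impI)
    fix j assume "j < Suc k"
    then show "?g j < ?g (Suc j)"
      using f assms(2) by (cases "j = k") auto
  qed
  ultimately show ?thesis unfolding ch_def by blast
qed

lemma cc_butlast: assumes "cc a b (Suc k)" shows "\<exists>c. cc a c k \<and> covered_by c b"
proof -
  obtain f where f: "f 0 = a" "f (Suc k) = b" "\<forall>j<Suc k. covered_by (f j) (f (Suc j))"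
    using assms(1) unfolding cc_def by blast
  have "cc a (f k) k" unfolding cc_def using f by auto
  moreover have "covered_by (f k) b" using f by auto
  ultimately show ?thesis by blast
qed

lemma ch_butlast: assumes "ch a b (Suc k)" shows "\<exists>c. ch a c k \<and> c < b"
proof -
  obtain f where f: "f 0 = a" "f (Suc k) = b" "\<forall>j<Suc k. f j < f (Suc j)"
    using assms(1) unfolding ch_def by blast
  have "ch a (f k) k" unfolding ch_def using f by auto
  moreover have "f k < b" using f by auto
  ultimately show ?thesis by blast
qed

lemma cc_cons: assumes "covered_by a b" "cc b c k" shows "cc a c (Suc k)"
proof -
  obtain f where f: "f 0 = b" "f k = c" "\<forall>j<k. covered_by (f j) (f (Suc j))"
    using assms(2) unfolding cc_def by blast
  let ?g = "\<lambda>j. case j of 0 \<Rightarrow> a | Suc j' \<Rightarrow> f j'"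
  have "?g 0 = a" "?g (Suc k) = c" using f by auto
  moreover have "\<forall>j<Suc k. covered_by (?g j) (?g (Suc j))"
  proof (intro allI impI)
    fix j assume "j < Suc k"
    then show "covered_by (?g j) (?g (Suc j))"
      using f assms(1) by (cases j) auto
  qed
  ultimately show ?thesis unfolding cc_def by blast
qed

lemma cc_append: "cc a b k \<Longrightarrow> cc b c l \<Longrightarrow> cc a c (k + l)"
proof (induction l arbitrary: c)
  case 0 then show ?case using cc_zero by fastforce
next
  case (Suc l)
  obtain c' where "cc b c' l" "covered_by c' c" using cc_butlast Suc.prems(2) by blast
  then show ?case using Suc.IH Suc.prems(1) cc_snoc by fastforce
qed

lemma cc_one: "cc a b (Suc 0) \<Longrightarrow> covered_by a b"
  unfolding cc_def by auto

lemma cc_one': "covered_by a b \<Longrightarrow> cc a b (Suc 0)"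
  using cc_snoc cc_refl by blast


lemma lt_sup: "\<not> y \<le> x \<Longrightarrow> (x::'b::lattice) < sup x y"
  by (metis le_less sup.cobounded1 sup.cobounded2)

lemma inf_lt: "\<not> x \<le> y \<Longrightarrow> inf x y < (x::'b::lattice)"
  by (metis le_less inf.cobounded1 inf.cobounded2)

locale rlg =
  fixes m :: "'a::lattice \<Rightarrow> 'a \<Rightarrow> 'a" and e :: 'a and i :: "'a \<Rightarrow> 'a"
  assumes grp: "right_l_group m e i"
    and modl: "modular_lattice TYPE('a)"
    and noeth: "noetherian_order TYPE('a)"
    and mex: "\<exists>s. is_meet_of (coatoms_below e) s"
begin

lemma assoc: "m (m x y) z = m x (m y z)" using grp unfolding right_l_group_def by blast
lemma lid[simp]: "m e x = x" using grp unfolding right_l_group_def by blast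
lemma rid[simp]: "m x e = x" using grp unfolding right_l_group_def by blast
lemma linv[simp]: "m (i x) x = e" using grp unfolding right_l_group_def by blast
lemma rinv[simp]: "m x (i x) = e" using grp unfolding right_l_group_def by blast
lemma mono_r: "x \<le> y \<Longrightarrow> m x z \<le> m y z" using grp unfolding right_l_group_def by blast

lemma cancel_r[simp]: "m (m x z) (i z) = x" by (simp add: assoc)
lemma cancel_r2[simp]: "m (m x (i z)) z = x" by (simp add: assoc)
lemma cancel_l[simp]: "m (i a) (m a x) = x" by (simp add: assoc[symmetric])
lemma cancel_l2[simp]: "m a (m (i a) x) = x" by (simp add: assoc[symmetric])

lemma le_r_iff: "m x z \<le> m y z \<longleftrightarrow> x \<le> y"
proof
  assume "m x z \<le> m y z"
  then have "m (m x z) (i z) \<le> m (m y z) (i z)" by (rule mono_r)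
  then show "x \<le> y" by simp
qed (rule mono_r)

lemma eq_r_iff: "m x z = m y z \<longleftrightarrow> x = y" by (metis cancel_r)

lemma less_r_iff: "m x z < m y z \<longleftrightarrow> x < y"
  by (simp add: less_le le_r_iff eq_r_iff)

lemma cov_r: assumes "covered_by x y" shows "covered_by (m x z) (m y z)"
proof -
  from assms have h1: "x < y" and h2: "\<not>(\<exists>w. x < w \<and> w < y)" unfolding covered_by_def by auto
  have "m x z < m y z" using h1 less_r_iff by blast
  moreover have "\<not>(\<exists>w. m x z < w \<and> w < m y z)"
  proof
    assume "\<exists>w. m x z < w \<and> w < m y z"
    then obtain w where w1: "m x z < w" and w2: "w < m y z" by blast
    have "m x z < m (m w (i z)) z" using w1 by simp
    hence a: "x < m w (i z)" using less_r_iff by blast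
    have "m (m w (i z)) z < m y z" using w2 by simp
    hence "m w (i z) < y" using less_r_iff by blast
    with a h2 show False by blast
  qed
  ultimately show ?thesis unfolding covered_by_def by blast
qed

lemma modlaw: "(x::'a) \<le> z \<Longrightarrow> sup x (inf y z) = inf (sup x y) z"
proof -
  assume xz: "x \<le> z"
  have "\<forall>x y z::'a. x \<le> z \<longrightarrow> sup x (inf y z) = inf (sup x y) z"
    using modl unfolding modular_lattice_def by assumption
  then show ?thesis using xz by simp
qed

lemma L1: assumes "covered_by x (sup x (u::'a))" shows "covered_by (inf x u) u"
proof -
  have c1: "x < sup x u" and c2: "\<not>(\<exists>w. x < w \<and> w < sup x u)" using assms covered_by_def by auto
  have "inf x u < u"
  proof (rule ccontr)
    assume "\<not> inf x u < u"
    hence "inf x u = u" using inf_le2[of x u] by (auto simp: less_le)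
    hence "u \<le> x" by (metis inf_le1)
    hence "sup x u = x" by (simp add: sup_absorb1)
    with c1 show False by simp
  qed
  moreover have "\<not>(\<exists>w. inf x u < w \<and> w < u)"
  proof
    assume "\<exists>w. inf x u < w \<and> w < u"
    then obtain w where w1: "inf x u < w" and w2: "w < u" by blast
    have le1: "sup x w \<le> sup x u" using w2 by (simp add: le_supI2)
    have "sup x w \<noteq> x"
    proof
      assume "sup x w = x"
      hence "w \<le> x" by (metis sup_ge2)
      hence wi: "w \<le> inf x u" using w2 by simp
      from leD[OF wi] w1 show False by simp
    qed
    hence "x < sup x w" by (simp add: less_le)
    hence eq: "sup x w = sup x u" using cov_between[OF assms _ le1] by blast
    have "sup w (inf x u) = inf (sup w x) u" using w2 by (simp add: modlaw)
    moreover have "sup w (inf x u) = w" using w1 by (simp add: sup_absorb1)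
    moreover have "inf (sup w x) u = u" using eq by (simp add: sup_commute inf_absorb2)
    ultimately show False using w2 by simp
  qed
  ultimately show ?thesis unfolding covered_by_def by blast
qed

lemma L2: assumes "covered_by (inf x (u::'a)) u" shows "covered_by x (sup x u)"
proof -
  have c1: "inf x u < u" and c2: "\<not>(\<exists>w. inf x u < w \<and> w < u)" using assms covered_by_def by auto
  have "x < sup x u"
  proof (rule ccontr)
    assume "\<not> x < sup x u"
    hence "sup x u = x" using sup_ge1[of x u] by (auto simp: less_le)
    hence "u \<le> x" by (metis sup_ge2)
    hence "inf x u = u" by (simp add: inf_absorb2)
    with c1 show False by simp
  qed
  moreover have "\<not>(\<exists>w. x < w \<and> w < sup x u)"
  proof
    assume "\<exists>w. x < w \<and> w < sup x u"
    then obtain w where w1: "x < w" and w2: "w < sup x u" by blast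
    have le1: "inf x u \<le> inf w u" using w1 by (simp add: le_infI1)
    have "inf w u \<noteq> u"
    proof
      assume "inf w u = u"
      hence "u \<le> w" by (metis inf_le1)
      hence ws: "sup x u \<le> w" using w1 by simp
      from leD[OF ws] w2 show False by simp
    qed
    hence "inf w u < u" by (simp add: less_le)
    hence eq: "inf w u = inf x u" using cov_between2[OF assms le1] by blast
    have "sup x (inf u w) = inf (sup x u) w" using w1 by (simp add: modlaw)
    moreover have "sup x (inf u w) = x" using eq by (simp add: inf_commute sup_absorb1)
    moreover have "inf (sup x u) w = w" using w2 by (simp add: inf_absorb2)
    ultimately show False using w1 by simp
  qed
  ultimately show ?thesis unfolding covered_by_def by blast
qed

lemma wf_up: "wf {(x,y). (a::'a) \<le> x \<and> x < y}"
  unfolding wf_iff_no_infinite_down_chain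
proof
  assume "\<exists>f. \<forall>n. (f (Suc n), f n) \<in> {(x,y). a \<le> x \<and> x < y}"
  then obtain f where f: "\<And>n. a \<le> f (Suc n) \<and> f (Suc n) < f n" by auto
  have nf: "\<nexists>h::nat\<Rightarrow>'a. (\<forall>n. a \<le> h n) \<and> (\<forall>n. h (Suc n) < h n)"
    using noeth unfolding noetherian_order_def by (erule_tac x=a in allE) (erule conjE)
  have "(\<forall>n. a \<le> f (Suc n)) \<and> (\<forall>n. f (Suc (Suc n)) < f (Suc n))" using f by auto
  then have "\<exists>h::nat\<Rightarrow>'a. (\<forall>n. a \<le> h n) \<and> (\<forall>n. h (Suc n) < h n)" by (rule exI[of _ "\<lambda>n. f (Suc n)"])
  then show False using nf by blast
qed

lemma wf_down: "wf {(x,y). x \<le> (b::'a) \<and> y < x}"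
  unfolding wf_iff_no_infinite_down_chain
proof
  assume "\<exists>f. \<forall>n. (f (Suc n), f n) \<in> {(x,y). x \<le> b \<and> y < x}"
  then obtain f where f: "\<And>n. f (Suc n) \<le> b \<and> f n < f (Suc n)" by auto
  have nf: "\<nexists>h::nat\<Rightarrow>'a. (\<forall>n. h n \<le> b) \<and> (\<forall>n. h n < h (Suc n))"
    using noeth unfolding noetherian_order_def by (erule_tac x=b in allE) (erule conjE)
  have "(\<forall>n. f (Suc n) \<le> b) \<and> (\<forall>n. f (Suc n) < f (Suc (Suc n)))" using f by auto
  then have "\<exists>h::nat\<Rightarrow>'a. (\<forall>n. h n \<le> b) \<and> (\<forall>n. h n < h (Suc n))" by (rule exI[of _ "\<lambda>n. f (Suc n)"])
  then show False using nf by blast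
qed

lemma exists_cover: assumes "(a::'a) < b" shows "\<exists>c. covered_by a c \<and> c \<le> b"
proof -
  have mem: "b \<in> {z. a < z \<and> z \<le> b}" using assms by simp
  obtain c where c: "c \<in> {z. a < z \<and> z \<le> b}"
    and mn: "\<And>y. (y, c) \<in> {(x,y). a \<le> x \<and> x < y} \<Longrightarrow> y \<notin> {z. a < z \<and> z \<le> b}"
    using wfE_min[OF wf_up[of a] mem] by blast
  have "covered_by a c"
    unfolding covered_by_def
  proof (intro conjI notI)
    show "a < c" using c by simp
    assume "\<exists>z. a < z \<and> z < c"
    then obtain z where z1: "a < z" and z2: "z < c" by blast
    have cb: "c \<le> b" using c by simp
    have "z \<le> b" using less_imp_le[OF less_le_trans[OF z2 cb]] .
    then show False using mn[of z] z1 z2 less_imp_le[OF z1] by simp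
  qed
  then show ?thesis using c by auto
qed

lemma exists_lower_cover: assumes "(a::'a) < b" shows "\<exists>c. covered_by c b \<and> a \<le> c"
proof -
  have mem: "a \<in> {z. a \<le> z \<and> z < b}" using assms by simp
  obtain c where c: "c \<in> {z. a \<le> z \<and> z < b}"
    and mn: "\<And>y. (y, c) \<in> {(x,y). x \<le> b \<and> y < x} \<Longrightarrow> y \<notin> {z. a \<le> z \<and> z < b}"
    using wfE_min[OF wf_down[of b] mem] by blast
  have "covered_by c b"
    unfolding covered_by_def
  proof (intro conjI notI)
    show "c < b" using c by simp
    assume "\<exists>z. c < z \<and> z < b"
    then obtain z where z1: "c < z" and z2: "z < b" by blast
    have ac: "a \<le> c" using c by simp
    have "a \<le> z" using less_imp_le[OF le_less_trans[OF ac z1]] .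
    then show False using mn[of z] z1 z2 less_imp_le[OF z2] by simp
  qed
  then show ?thesis using c by auto
qed

lemma cc_exists: "(a::'a) \<le> b \<Longrightarrow> \<exists>k. cc a b k"
proof (induction a rule: wf_induct[OF wf_down[of b]])
  case (1 a)
  show ?case
  proof (cases "a = b")
    case True then show ?thesis using cc_refl by blast
  next
    case False
    then have "a < b" using 1 by simp
    then obtain c where c: "covered_by a c" "c \<le> b" using exists_cover by blast
    then have "(c, a) \<in> {(x,y). x \<le> b \<and> y < x}" using cov_less by auto
    then obtain k where "cc c b k" using 1 c by blast
    then show ?thesis using cc_cons c by blast
  qed
qed

lemma cc_tr: "cc a b k \<Longrightarrow> cc (m a z) (m b z) k"
proof -
  assume "cc a b k"
  then obtain f where f: "f 0 = a" "f k = b" "\<forall>j<k. covered_by (f j) (f (Suc j))"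
    unfolding cc_def by blast
  let ?g = "\<lambda>j. m (f j) z"
  have "\<forall>j<k. covered_by (?g j) (?g (Suc j))" using f cov_r by blast
  moreover have "?g 0 = m a z" "?g k = m b z" using f by simp_all
  ultimately show ?thesis unfolding cc_def by (intro exI[of _ ?g]) simp
qed


lemma JD: "cc (a::'a) b k \<Longrightarrow> ch a b n \<Longrightarrow> n \<le> k"
proof (induction k arbitrary: a b n rule: less_induct)
  case (less k)
  show ?case
  proof (cases n)
    case 0 then show ?thesis by simp
  next
    case (Suc n')
    from less.prems(2) Suc obtain y where y1: "ch a y n'" and y2: "y < b" using ch_butlast by blast
    have ay: "a \<le> y" using y1 ch_le by blast
    hence ab: "a < b" using y2 by simp
    show ?thesis
    proof (cases k)
      case 0 then have "a = b" using less.prems(1) cc_zero by blast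
      with ab show ?thesis by simp
    next
      case (Suc k')
      from less.prems(1) Suc obtain x where x1: "cc a x k'" and x2: "covered_by x b"
        using cc_butlast by blast
      have kk: "k' < k" using Suc by simp
      have ax: "a \<le> x" using x1 cc_ch ch_le by blast
      show ?thesis
      proof (cases "y \<le> x")
        case True
        show ?thesis
        proof (cases "y = x")
          case True
          then have "n' \<le> k'" using less.IH[OF kk x1] y1 by simp
          then show ?thesis using \<open>n = Suc n'\<close> \<open>k = Suc k'\<close> by simp
        next
          case False
          with \<open>y \<le> x\<close> have "y < x" by simp
          then have "ch a x (Suc n')" using ch_snoc y1 by blast
          then have "Suc n' \<le> k'" using less.IH[OF kk x1] by blast
          then show ?thesis using \<open>n = Suc n'\<close> \<open>k = Suc k'\<close> by simp
        qed
      next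
        case False
        have xb: "x < b" using x2 cov_less by blast
        have s1: "sup x y \<le> b" using xb y2 by (simp add: less_imp_le)
        have s2: "x < sup x y" using False by (rule lt_sup)
        have sxy: "sup x y = b" using cov_between[OF x2 s2 s1] .
        then have "covered_by x (sup x y)" using x2 by simp
        then have cu: "covered_by (inf x y) y" by (rule L1)
        have "a \<le> inf x y" using ax ay by simp
        then obtain j where j: "cc a (inf x y) j" using cc_exists by blast
        have "inf x y \<noteq> x"
        proof
          assume "inf x y = x"
          then have "x \<le> y" by (metis inf_le2)
          then have "x < y" using False by (simp add: less_le)
          then show False using x2 y2 unfolding covered_by_def by blast
        qed
        then have "inf x y < x" by (simp add: less_le)
        then have "ch a x (Suc j)" using ch_snoc cc_ch j by blast
        then have sj: "Suc j \<le> k'" using less.IH[OF kk x1] by blast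
        have cay: "cc a y (Suc j)" using cc_snoc j cu by blast
        have "Suc j < k" using sj Suc by simp
        then have "n' \<le> Suc j" using less.IH[OF _ cay y1] by blast
        then show ?thesis using sj \<open>n = Suc n'\<close> \<open>k = Suc k'\<close> by simp
      qed
    qed
  qed
qed

lemma cc_unique: "cc (a::'a) b k \<Longrightarrow> cc a b l \<Longrightarrow> k = l"
  using JD[of a b k l] JD[of a b l k] cc_ch[of a b k] cc_ch[of a b l] by simp

definition sg where "sg = (SOME s. is_meet_of (coatoms_below e) s)"

lemma sg_meet: "is_meet_of (coatoms_below e) sg"
  unfolding sg_def using someI_ex[OF mex] .

lemma phi_le_LC: assumes "covered_by y x" shows "m sg x \<le> y"
proof -
  have "covered_by (m y (i x)) (m x (i x))" using assms by (rule cov_r)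
  hence "m y (i x) \<in> coatoms_below e" by (simp add: coatoms_below_def)
  hence "sg \<le> m y (i x)" using sg_meet unfolding is_meet_of_def by blast
  hence "m sg x \<le> m (m y (i x)) x" by (rule mono_r)
  thus ?thesis by simp
qed

lemma phi_greatest: assumes h: "\<And>y. covered_by y x \<Longrightarrow> t \<le> y" shows "t \<le> m sg x"
proof -
  have "\<forall>z\<in>coatoms_below e. m t (i x) \<le> z"
  proof
    fix z assume "z \<in> coatoms_below e"
    hence "covered_by z e" by (simp add: coatoms_below_def)
    hence "covered_by (m z x) (m e x)" by (rule cov_r)
    hence "t \<le> m z x" using h by simp
    hence "m t (i x) \<le> m (m z x) (i x)" by (rule mono_r)
    thus "m t (i x) \<le> z" by simp
  qed
  hence "m t (i x) \<le> sg" using sg_meet unfolding is_meet_of_def by blast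
  hence "m (m t (i x)) x \<le> m sg x" by (rule mono_r)
  thus ?thesis by simp
qed

lemma sg_le_e: assumes "g < e" shows "sg \<le> e"
proof -
  obtain c where c: "covered_by c e" "g \<le> c" using exists_lower_cover[OF assms] by blast
  have "c \<in> coatoms_below e" using c by (simp add: coatoms_below_def)
  hence "sg \<le> c" using sg_meet unfolding is_meet_of_def by blast
  thus ?thesis using cov_less[OF c(1)] by simp
qed

lemma phi_le: "sg \<le> e \<Longrightarrow> m sg x \<le> x"
  using mono_r[of sg e x] by simp

lemma phi_mono: assumes se: "sg \<le> e" and xy: "x \<le> y" shows "m sg x \<le> m sg y"
proof (rule phi_greatest)
  fix z assume zc: "covered_by z y"
  show "m sg x \<le> z"
  proof (cases "x \<le> z")
    case True then show ?thesis using phi_le[OF se, of x] by simp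
  next
    case False
    have a1: "z < sup z x" using False by (rule lt_sup)
    have a2: "sup z x \<le> y" using xy cov_less[OF zc] by simp
    have "sup z x = y" using cov_between[OF zc a1 a2] .
    then have "covered_by z (sup z x)" using zc by simp
    then have "covered_by (inf z x) x" by (rule L1)
    then have "m sg x \<le> inf z x" by (rule phi_le_LC)
    then show ?thesis by simp
  qed
qed

lemma phi_inj: "m sg x = m sg y \<Longrightarrow> x = y"
  by (metis cancel_l)

lemma psi: "m sg (m (i sg) x) = x" by simp

lemma LemA: assumes se: "sg \<le> e" and cu: "covered_by (m sg x) u" shows "u \<le> x"
proof (rule ccontr)
  assume nu: "\<not> u \<le> x"
  let ?p = "m sg x"
  have p1: "?p \<le> inf x u" using phi_le[OF se, of x] cov_less[OF cu] by simp
  have p2: "inf x u < u" using nu by (metis inf.absorb_iff2 inf_le2 le_less inf_commute)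
  have "inf x u = ?p" using cov_between2[OF cu p1 p2] .
  hence cxu: "covered_by (inf x u) u" using cu by simp
  have cy: "covered_by x (sup x u)" using L2[OF cxu] .
  have "m sg (sup x u) \<le> ?p"
  proof (rule phi_greatest)
    fix c assume cc: "covered_by c x"
    have cx: "c \<le> x" using cov_less[OF cc] by simp
    have pc: "?p \<le> c" using phi_le_LC[OF cc] .
    have "sup c (inf u x) = inf (sup c u) x" using cx by (rule modlaw)
    moreover have "inf u x = ?p" using \<open>inf x u = ?p\<close> by (simp add: inf_commute)
    ultimately have eq: "inf (sup c u) x = c" using pc by (simp add: sup_absorb1)
    have "covered_by (inf (sup c u) x) x" using eq cc by simp
    then have "covered_by (sup c u) (sup (sup c u) x)" by (rule L2)
    moreover have "sup (sup c u) x = sup x u" using cx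
      by (metis sup.absorb_iff2 sup_assoc sup_commute)
    ultimately have "covered_by (sup c u) (sup x u)" by simp
    hence "m sg (sup x u) \<le> sup c u" by (rule phi_le_LC)
    moreover have "m sg (sup x u) \<le> x" using cy phi_le_LC by blast
    ultimately have "m sg (sup x u) \<le> inf (sup c u) x" by simp
    thus "m sg (sup x u) \<le> c" using eq by simp
  qed
  moreover have "?p \<le> m sg (sup x u)" using phi_mono[OF se] by simp
  ultimately have "m sg (sup x u) = m sg x" by simp
  hence "sup x u = x" by (rule phi_inj)
  hence "u \<le> x" by (metis sup_ge2)
  with nu show False by simp
qed

lemma LemF: assumes se: "sg \<le> e" and mt: "mm \<le> m sg t" and Dt: "D \<le> t"
  and cm: "covered_by mm m'" and mD: "m' < D"
  and un: "\<And>z. mm < z \<Longrightarrow> z \<le> D \<Longrightarrow> m' \<le> z"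
  shows "m' \<le> m sg t"
proof (rule phi_greatest)
  fix Y assume cY: "covered_by Y t"
  show "m' \<le> Y"
  proof (cases "D \<le> Y")
    case True then show ?thesis using mD by simp
  next
    case False
    have a1: "Y < sup Y D" using False by (rule lt_sup)
    have a2: "sup Y D \<le> t" using Dt cov_less[OF cY] by simp
    have "sup Y D = t" using cov_between[OF cY a1 a2] .
    then have "covered_by Y (sup Y D)" using cY by simp
    then have cYD: "covered_by (inf Y D) D" by (rule L1)
    have mmY: "mm \<le> Y" using mt phi_le_LC[OF cY] by simp
    have mmm: "mm < m'" using cov_less[OF cm] .
    have mmD: "mm \<le> D" using mmm mD by simp
    have b1: "mm \<le> inf Y D" using mmY mmD by simp
    have "inf Y D \<noteq> mm"
    proof
      assume "inf Y D = mm"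
      then have "covered_by mm D" using cYD by simp
      then show False using mmm mD unfolding covered_by_def by blast
    qed
    then have lt: "mm < inf Y D" using b1 by (simp add: less_le)
    have "m' \<le> inf Y D" by (rule un[OF lt inf_le2])
    then show ?thesis by simp
  qed
qed

lemma LemC: assumes se: "sg \<le> e" and cxy: "covered_by x y"
  shows "covered_by (m sg x) (m sg y)"
proof -
  obtain n where n: "cc sg e n" using cc_exists[OF se] by blast
  have c1: "cc (m sg x) x n" using cc_tr[OF n, of x] by simp
  have c2: "cc (m sg y) y n" using cc_tr[OF n, of y] by simp
  have c3: "cc (m sg x) y (Suc n)" using cc_snoc[OF c1 cxy] .
  have "m sg x \<le> m sg y" using phi_mono[OF se] cov_less[OF cxy] by simp
  then obtain j where j: "cc (m sg x) (m sg y) j" using cc_exists by blast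
  have "cc (m sg x) y (j + n)" using cc_append[OF j c2] .
  then have "j + n = Suc n" using cc_unique c3 by blast
  then have "j = Suc 0" by simp
  then show ?thesis using j cc_one by simp
qed

lemma main_lemma:
  assumes se: "sg \<le> e" and cM: "covered_by (M::'a) M'" and cA: "covered_by M' A" and cB: "covered_by M' B"
    and AB: "A \<noteq> B" and Ae: "A \<le> e" and Be: "B \<le> e"
    and un: "\<And>z. M < z \<Longrightarrow> z \<le> e \<Longrightarrow> M' \<le> z"
  shows False
proof -
  define sM where "sM = m (i sg) M"
  have phisM: "m sg sM = M" unfolding sM_def by simp
  have MA: "M' < A" using cov_less[OF cA] .
  have MB: "M' < B" using cov_less[OF cB] .
  have MM: "M < M'" using cov_less[OF cM] .
  have M'e: "M' \<le> e" using MA Ae by simp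
  have i1: "M' \<le> sM" using LemA[OF se, of sM M'] phisM cM by simp
  have i2: "inf sM e = M'"
  proof (rule ccontr)
    assume ne: "inf sM e \<noteq> M'"
    have "M' \<le> inf sM e" using i1 M'e by simp
    hence lt: "M' < inf sM e" using ne by (simp add: less_le)
    have "M' \<le> m sg sM"
      using LemF[OF se _ _ cM lt, of sM] phisM un by simp
    with MM phisM show False by simp
  qed
  have i3: "inf A sM = M'"
  proof (rule antisym)
    have "inf A sM \<le> inf sM e" using Ae by (simp add: le_infI1 inf_commute)
    then show "inf A sM \<le> M'" using i2 by simp
    show "M' \<le> inf A sM" using MA i1 by simp
  qed
  define P where "P = sup sM A"
  have cP: "covered_by sM P" unfolding P_def
    using L2[of sM A] i3 cA by (simp add: inf_commute)
  have sP: "sM \<le> P" unfolding P_def by simp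
  have AP: "A \<le> P" unfolding P_def by simp
  have v: "M' \<le> m sg P"
  proof (rule LemF[OF se _ AP cM MA])
    show "M \<le> m sg P" using phi_mono[OF se sP] phisM by simp
    fix z assume "M < z" "z \<le> A" then show "M' \<le> z" using un Ae by simp
  qed
  have vi: "covered_by M (m sg P)" using LemC[OF se cP] phisM by simp
  have "m sg P = M'"
  proof (rule ccontr)
    assume "m sg P \<noteq> M'"
    hence "M' < m sg P" using v by (simp add: less_le)
    with MM vi show False unfolding covered_by_def by blast
  qed
  hence "covered_by (m sg P) B" using cB by simp
  hence BP: "B \<le> P" using LemA[OF se] by blast
  define C where "C = sup A B"
  have CP: "C \<le> P" unfolding C_def using AP BP by simp
  have Ce: "C \<le> e" unfolding C_def using Ae Be by simp
  have AC: "A \<le> C" unfolding C_def by simp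
  have "sup A (inf sM C) = inf (sup A sM) C" using AC by (rule modlaw)
  moreover have "inf sM C \<le> A"
  proof -
    have "inf sM C \<le> inf sM e" using Ce by (simp add: le_infI2)
    then show ?thesis using i2 MA by simp
  qed
  moreover have "inf (sup A sM) C = C" using CP unfolding P_def by (simp add: sup_commute inf_absorb2)
  ultimately have "A = C" by (simp add: sup_absorb1)
  hence "B \<le> A" unfolding C_def by (metis sup_ge2)
  hence "B = A" using cov_between[OF cA MB] by simp
  with AB show False by simp
qed


lemma irr_chain: "(g::'a) \<le> e \<longrightarrow> meet_irreducible_neg e g \<longrightarrow> dual_chain e g"
proof (induction g rule: wf_induct[OF wf_down[of e]])
  case (1 g)
  show ?case
  proof (intro impI)
    assume g0: "g \<le> e" and mi: "meet_irreducible_neg e g"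
    show "dual_chain e g"
    proof (cases "g = e")
      case True
      show ?thesis unfolding dual_chain_def
      proof (intro allI impI)
        fix x y assume h: "g \<le> x \<and> x \<le> e \<and> g \<le> y \<and> y \<le> e"
        then have "x = e" "y = e" using True by (auto intro: antisym)
        then show "x \<le> y \<or> y \<le> x" by simp
      qed
    next
      case False
      hence ge: "g < e" using g0 by (simp add: less_le)
      have se: "sg \<le> e" using sg_le_e[OF ge] .
      obtain g' where cg: "covered_by g g'" and g'e: "g' \<le> e" using exists_cover[OF ge] by blast
      have irr: "\<not>(\<exists>a b. a \<le> e \<and> b \<le> e \<and> a \<noteq> g \<and> b \<noteq> g \<and> g = inf a b)"
        using mi unfolding meet_irreducible_neg_def by blast
      have un: "\<And>z. g < z \<Longrightarrow> z \<le> e \<Longrightarrow> g' \<le> z"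
      proof (rule ccontr)
        fix z assume gz: "g < z" and ze: "z \<le> e" and n: "\<not> g' \<le> z"
        have w1: "g \<le> inf g' z" using cov_less[OF cg] gz by (simp add: less_imp_le)
        have w2: "inf g' z < g'" using n by (rule inf_lt)
        have eq: "g = inf g' z" using cov_between2[OF cg w1 w2] by simp
        have "g' \<noteq> g" "z \<noteq> g" using cov_less[OF cg] gz by auto
        then show False using irr g'e ze eq by blast
      qed
      have irr': "meet_irreducible_neg e g'"
        unfolding meet_irreducible_neg_def
      proof (intro conjI notI)
        show "g' \<le> e" by (rule g'e)
        assume "\<exists>a b. a \<le> e \<and> b \<le> e \<and> a \<noteq> g' \<and> b \<noteq> g' \<and> g' = inf a b"
        then obtain a b where ab: "a \<le> e" "b \<le> e" "a \<noteq> g'" "b \<noteq> g'" "g' = inf a b" by blast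
        have "g' \<le> a" using ab(5) by simp
        hence ga: "g' < a" using ab(3) by (simp add: less_le)
        have "g' \<le> b" using ab(5) by simp
        hence gb: "g' < b" using ab(4) by (simp add: less_le)
        obtain A where cA: "covered_by g' A" and Aa: "A \<le> a" using exists_cover[OF ga] by blast
        obtain B where cB: "covered_by g' B" and Bb: "B \<le> b" using exists_cover[OF gb] by blast
        have AB: "A \<noteq> B"
        proof
          assume "A = B"
          hence "A \<le> inf a b" using Aa Bb by simp
          hence "A \<le> g'" using ab(5) by simp
          thus False using cov_less[OF cA] by (simp add: leD)
        qed
        have Ae: "A \<le> e" using Aa ab(1) by (rule order_trans)
        have Be: "B \<le> e" using Bb ab(2) by (rule order_trans)
        show False using main_lemma[OF se cg cA cB AB Ae Be un] .
      qed
      have "(g', g) \<in> {(x,y). x \<le> e \<and> y < x}" using g'e cov_less[OF cg] by simp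
      hence dc: "dual_chain e g'" using 1 g'e irr' by blast
      show ?thesis unfolding dual_chain_def
      proof (intro allI impI)
        fix x y assume h: "g \<le> x \<and> x \<le> e \<and> g \<le> y \<and> y \<le> e"
        show "x \<le> y \<or> y \<le> x"
        proof (cases "x = g")
          case True then show ?thesis using h by simp
        next
          case xg: False
          show ?thesis
          proof (cases "y = g")
            case True then show ?thesis using h by simp
          next
            case yg: False
            have "g < x" using xg h by (simp add: less_le)
            hence gx: "g' \<le> x" using un h by simp
            have "g < y" using yg h by (simp add: less_le)
            hence gy: "g' \<le> y" using un h by simp
            show ?thesis using dc h gx gy unfolding dual_chain_def by blast
          qed
        qed
      qed
    qed
  qed
qed

lemma chain_irr: assumes g0: "(g::'a) \<le> e" and dc: "dual_chain e g"
  shows "meet_irreducible_neg e g"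
  unfolding meet_irreducible_neg_def
proof (intro conjI notI)
  show "g \<le> e" by (rule g0)
  assume "\<exists>a b. a \<le> e \<and> b \<le> e \<and> a \<noteq> g \<and> b \<noteq> g \<and> g = inf a b"
  then obtain a b where ab: "a \<le> e" "b \<le> e" "a \<noteq> g" "b \<noteq> g" "g = inf a b" by blast
  have "g \<le> a" "g \<le> b" using ab(5) by simp_all
  hence "a \<le> b \<or> b \<le> a" using dc ab(1,2) unfolding dual_chain_def by blast
  thus False
  proof
    assume "a \<le> b" hence "inf a b = a" by (simp add: inf_absorb1)
    with ab show False by simp
  next
    assume "b \<le> a" hence "inf a b = b" by (simp add: inf_absorb2)
    with ab show False by simp
  qed
qed

end

theorem mainTheorem9:
  fixes m :: "'a::lattice \<Rightarrow> 'a \<Rightarrow> 'a" and e :: 'a and i :: "'a \<Rightarrow> 'a" and g :: 'a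
  assumes "right_l_group m e i"
    and "modular_lattice TYPE('a)"
    and "noetherian_order TYPE('a)"
    and "\<exists>s. is_meet_of (coatoms_below e) s"
    and "g \<le> e"
  shows "meet_irreducible_neg e g \<longleftrightarrow> dual_chain e g"
proof -
  interpret R: rlg m e i using assms(1-4) by (rule rlg.intro)
  show ?thesis using R.irr_chain R.chain_irr assms(5) by blast
qed

end
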